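(* For every finite $\sigma$-structure $\mathscr{A}$, $\mathsf{td}(\mathscr{A})=\kappa^{\mathbb{E}}(\mathscr{A})$.
   Context: $\mathbb{E}_k\mathscr{A}$ ($k\ge1$): universe $A^{\le k}$ (non-empty sequences of length $\le k$); $R(s_1,\dots,s_n)$ iff the $s_i$ are pairwise prefix-comparable and $R^{\mathscr{A}}$ holds of their last elements; $\varepsilon[a_1,\dots,a_j]=a_j$; $\delta[a_1,\dots,a_j]=[[a_1],[a_1,a_2],\dots,[a_1,\dots,a_j]]$; $\mathbb{E}_k h[a_1,\dots,a_j]=[h(a_1),\dots,h(a_j)]$. An $\mathbb{E}_k$-coalgebra on $\mathscr{A}$ is a homomorphism $\alpha:\mathscr{A}\to\mathbb{E}_k\mathscr{A}$ with $\delta\circ\alpha=\mathbb{E}_k\alpha\circ\alpha$ and $\varepsilon\circ\alpha=\mathrm{id}$. $\kappa^{\mathbb{E}}(\mathscr{A})$ is the least $k$ such that an $\mathbb{E}_k$-coalgebra on $\mathscr{A}$ exists. Gaifman graph $\mathcal{G}(\mathscr{A})=(A,\frown)$: $a\frown a'$ iff $a\ne a'$ and both occur in a common tuple of some $R^{\mathscr{A}}$. Forest: poset where predecessors of each element form a finite chain; height = max chain size. Forest cover of $(V,\frown)$: forest order on $V$ in which adjacent vertices are comparable. $\mathsf{td}(\mathscr{A})$ is the minimum height of a forest cover of $\mathcal{G}(\mathscr{A})$. *)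

theory Defs
  imports Main "HOL-Library.Sublist"
begin

text \<open>A relational sigma-structure is given by a universe A :: 'a set and an
interpretation R :: 'r => 'a list => bool of the relation symbols (of type 'r),
with arity function ar :: 'r => nat.\<close>

definition wf_structure :: "'a set \<Rightarrow> ('r \<Rightarrow> nat) \<Rightarrow> ('r \<Rightarrow> 'a list \<Rightarrow> bool) \<Rightarrow> bool" where
  "wf_structure A ar R \<longleftrightarrow> (\<forall>r t. R r t \<longrightarrow> length t = ar r \<and> set t \<subseteq> A)"

definition Ek_univ :: "nat \<Rightarrow> 'a set \<Rightarrow> 'a list set" where
  "Ek_univ k A = {s. s \<noteq> [] \<and> length s \<le> k \<and> set s \<subseteq> A}"

definition Ek_rel :: "('r \<Rightarrow> 'a list \<Rightarrow> bool) \<Rightarrow> 'r \<Rightarrow> 'a list list \<Rightarrow> bool" where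
  "Ek_rel R r ss \<longleftrightarrow>
     (\<forall>s\<in>set ss. \<forall>s'\<in>set ss. prefix s s' \<or> prefix s' s) \<and> R r (map last ss)"

definition Ek_counit :: "'a list \<Rightarrow> 'a" where
  "Ek_counit s = last s"

definition Ek_comult :: "'a list \<Rightarrow> 'a list list" where
  "Ek_comult s = map (\<lambda>i. take i s) [1..<Suc (length s)]"

definition Ek_map :: "('a \<Rightarrow> 'b) \<Rightarrow> 'a list \<Rightarrow> 'b list" where
  "Ek_map h s = map h s"

definition Ek_hom :: "nat \<Rightarrow> 'a set \<Rightarrow> ('r \<Rightarrow> 'a list \<Rightarrow> bool) \<Rightarrow> ('a \<Rightarrow> 'a list) \<Rightarrow> bool" where
  "Ek_hom k A R \<alpha> \<longleftrightarrow>
     (\<forall>a\<in>A. \<alpha> a \<in> Ek_univ k A) \<and> (\<forall>r t. R r t \<longrightarrow> Ek_rel R r (map \<alpha> t))"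

definition Ek_coalgebra :: "nat \<Rightarrow> 'a set \<Rightarrow> ('r \<Rightarrow> 'a list \<Rightarrow> bool) \<Rightarrow> ('a \<Rightarrow> 'a list) \<Rightarrow> bool" where
  "Ek_coalgebra k A R \<alpha> \<longleftrightarrow>
     Ek_hom k A R \<alpha> \<and>
     (\<forall>a\<in>A. Ek_comult (\<alpha> a) = Ek_map \<alpha> (\<alpha> a)) \<and>
     (\<forall>a\<in>A. Ek_counit (\<alpha> a) = a)"

definition kappaE :: "'a set \<Rightarrow> ('r \<Rightarrow> 'a list \<Rightarrow> bool) \<Rightarrow> nat" where
  "kappaE A R = (LEAST k. 1 \<le> k \<and> (\<exists>\<alpha>. Ek_coalgebra k A R \<alpha>))"

definition gaifman_adj :: "('r \<Rightarrow> 'a list \<Rightarrow> bool) \<Rightarrow> 'a \<Rightarrow> 'a \<Rightarrow> bool" where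
  "gaifman_adj R a a' \<longleftrightarrow> a \<noteq> a' \<and> (\<exists>r t. R r t \<and> a \<in> set t \<and> a' \<in> set t)"

definition forest_order :: "'a set \<Rightarrow> ('a \<Rightarrow> 'a \<Rightarrow> bool) \<Rightarrow> bool" where
  "forest_order V le \<longleftrightarrow>
     (\<forall>x\<in>V. le x x) \<and>
     (\<forall>x\<in>V. \<forall>y\<in>V. le x y \<and> le y x \<longrightarrow> x = y) \<and>
     (\<forall>x\<in>V. \<forall>y\<in>V. \<forall>z\<in>V. le x y \<and> le y z \<longrightarrow> le x z) \<and>
     (\<forall>x\<in>V. finite {y\<in>V. le y x} \<and>
        (\<forall>y\<in>V. \<forall>z\<in>V. le y x \<and> le z x \<longrightarrow> le y z \<or> le z y))"

definition is_chain_in :: "'a set \<Rightarrow> ('a \<Rightarrow> 'a \<Rightarrow> bool) \<Rightarrow> 'a set \<Rightarrow> bool" where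
  "is_chain_in V le C \<longleftrightarrow> C \<subseteq> V \<and> (\<forall>x\<in>C. \<forall>y\<in>C. le x y \<or> le y x)"

definition forest_height :: "'a set \<Rightarrow> ('a \<Rightarrow> 'a \<Rightarrow> bool) \<Rightarrow> nat" where
  "forest_height V le = Max (card ` {C. is_chain_in V le C})"

definition forest_cover :: "'a set \<Rightarrow> ('a \<Rightarrow> 'a \<Rightarrow> bool) \<Rightarrow> ('a \<Rightarrow> 'a \<Rightarrow> bool) \<Rightarrow> bool" where
  "forest_cover V adj le \<longleftrightarrow>
     forest_order V le \<and> (\<forall>x\<in>V. \<forall>y\<in>V. adj x y \<longrightarrow> le x y \<or> le y x)"

definition td :: "'a set \<Rightarrow> ('r \<Rightarrow> 'a list \<Rightarrow> bool) \<Rightarrow> nat" where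
  "td A R = (LEAST h. \<exists>le. forest_cover A (gaifman_adj R) le \<and> forest_height A le = h)"

end

theory Submission
  imports Defs
begin


lemma sorted_wrt_unique:
  assumes "sorted_wrt le xs" "sorted_wrt le ys" "distinct xs" "distinct ys" "set xs = set ys"
    "\<forall>x\<in>set xs. \<forall>y\<in>set xs. le x y \<and> le y x \<longrightarrow> x = y"
  shows "xs = ys"
  using assms
proof (induction xs arbitrary: ys)
  case Nil thus ?case by simp
next
  case (Cons x xs)
  then obtain y ys' where ys: "ys = y # ys'" by (cases ys) auto
  have "x = y"
  proof (rule ccontr)
    assume ne: "x \<noteq> y"
    then have "x \<in> set ys'" "y \<in> set xs" using Cons.prems ys by auto
    then have "le y x" "le x y" using Cons.prems ys by auto
    then show False using Cons.prems(6) ne \<open>y \<in> set xs\<close> by auto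
  qed
  moreover have "set xs = set ys'" using Cons.prems ys \<open>x = y\<close> by auto
  ultimately show ?case using Cons ys by auto
qed

lemma fo_refl: "forest_order A le \<Longrightarrow> x \<in> A \<Longrightarrow> le x x"
  unfolding forest_order_def by blast
lemma fo_antisym: "forest_order A le \<Longrightarrow> x \<in> A \<Longrightarrow> y \<in> A \<Longrightarrow> le x y \<Longrightarrow> le y x \<Longrightarrow> x = y"
  unfolding forest_order_def by blast
lemma fo_trans: "forest_order A le \<Longrightarrow> x \<in> A \<Longrightarrow> y \<in> A \<Longrightarrow> z \<in> A \<Longrightarrow> le x y \<Longrightarrow> le y z \<Longrightarrow> le x z"
  unfolding forest_order_def by blast
lemma fo_chain: "forest_order A le \<Longrightarrow> x \<in> A \<Longrightarrow> y \<in> A \<Longrightarrow> z \<in> A \<Longrightarrow> le y x \<Longrightarrow> le z x \<Longrightarrow> le y z \<or> le z y"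
  unfolding forest_order_def by blast

definition dep :: "'a set \<Rightarrow> ('a \<Rightarrow> 'a \<Rightarrow> bool) \<Rightarrow> 'a \<Rightarrow> nat" where
  "dep A le y = card {z\<in>A. le z y}"

definition alist :: "'a set \<Rightarrow> ('a \<Rightarrow> 'a \<Rightarrow> bool) \<Rightarrow> 'a \<Rightarrow> 'a list" where
  "alist A le a = sort_key (dep A le) (SOME xs. set xs = {y\<in>A. le y a} \<and> distinct xs)"

lemma alist_props:
  assumes fo: "forest_order A le" and fin: "finite A" and a: "a \<in> A"
  shows "distinct (alist A le a)" "set (alist A le a) = {y\<in>A. le y a}"
    "sorted_wrt le (alist A le a)"
proof -
  have ex: "\<exists>xs. set xs = {y\<in>A. le y a} \<and> distinct xs"
    using finite_distinct_list[of "{y\<in>A. le y a}"] fin by auto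
  define xs where "xs = (SOME xs. set xs = {y\<in>A. le y a} \<and> distinct xs)"
  have xs: "set xs = {y\<in>A. le y a}" "distinct xs" using someI_ex[OF ex] xs_def by auto
  define s where "s = alist A le a"
  have s: "s = sort_key (dep A le) xs" unfolding s_def alist_def xs_def ..
  show d: "distinct (alist A le a)" using xs s s_def by simp
  show st: "set (alist A le a) = {y\<in>A. le y a}" using xs s s_def by simp
  have srt: "sorted (map (dep A le) s)" using s by simp
  show "sorted_wrt le (alist A le a)"
    unfolding sorted_wrt_iff_nth_less
  proof (intro allI impI)
    fix i j assume ij: "i < j" "j < length (alist A le a)"
    let ?x = "s ! i" and ?y = "s ! j"
    have inx: "?x \<in> set s" "?y \<in> set s" using ij s_def by auto
    then have xA: "?x \<in> A" "le ?x a" "?y \<in> A" "le ?y a" using st s_def by auto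
    have dle: "dep A le ?x \<le> dep A le ?y"
      using sorted_nth_mono[OF srt, of i j] ij s_def by simp
    have neq: "?x \<noteq> ?y" using d ij s_def by (simp add: nth_eq_iff_index_eq)
    have comp: "le ?x ?y \<or> le ?y ?x" using fo_chain[OF fo a] xA by blast
    show "le (alist A le a ! i) (alist A le a ! j)"
    proof (cases "le ?x ?y")
      case True thus ?thesis using s_def by simp
    next
      case False
      then have yx: "le ?y ?x" using comp by auto
      have "{z\<in>A. le z ?y} \<subset> {z\<in>A. le z ?x}"
      proof
        show "{z\<in>A. le z ?y} \<subseteq> {z\<in>A. le z ?x}"
          using fo_trans[OF fo] xA yx by blast
        have "le ?x ?x" using fo_refl[OF fo] xA by blast
        moreover have "\<not> le ?x ?y" using False .
        ultimately show "{z\<in>A. le z ?y} \<noteq> {z\<in>A. le z ?x}" using xA by blast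
      qed
      then have "dep A le ?y < dep A le ?x" unfolding dep_def
        using fin by (simp add: psubset_card_mono)
      then show ?thesis using dle by simp
    qed
  qed
qed

lemma alist_take:
  assumes fo: "forest_order A le" and fin: "finite A" and a: "a \<in> A"
    and i: "i < length (alist A le a)"
  shows "take (Suc i) (alist A le a) = alist A le (alist A le a ! i)"
proof -
  define s where "s = alist A le a"
  define y where "y = s ! i"
  note P = alist_props[OF fo fin a, folded s_def]
  have yin: "y \<in> set s" using i s_def y_def by auto
  then have yA: "y \<in> A" "le y a" using P by auto
  note Q = alist_props[OF fo fin yA(1)]
  have set_eq: "set (take (Suc i) s) = {z\<in>A. le z y}"
  proof
    show "set (take (Suc i) s) \<subseteq> {z\<in>A. le z y}"
    proof
      fix z assume "z \<in> set (take (Suc i) s)"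
      then obtain j where j: "j < length (take (Suc i) s)" "take (Suc i) s ! j = z"
        by (auto simp: in_set_conv_nth)
      have jl: "j \<le> i" "j < length s" using j i s_def by auto
      have zs: "z = s ! j" using j by simp
      have "z \<in> A" using zs jl P by (auto simp: nth_mem)
      moreover have "le z y"
      proof (cases "j = i")
        case True thus ?thesis using zs y_def fo_refl[OF fo] \<open>z\<in>A\<close> by simp
      next
        case False thus ?thesis using sorted_wrt_nth_less[OF P(3), of j i] jl i zs y_def s_def by simp
      qed
      ultimately show "z \<in> {z\<in>A. le z y}" by simp
    qed
  next
    show "{z\<in>A. le z y} \<subseteq> set (take (Suc i) s)"
    proof
      fix z assume z: "z \<in> {z\<in>A. le z y}"
      then have "le z a" using fo_trans[OF fo, of z y a] yA a by simp
      then have "z \<in> set s" using P z by auto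
      then obtain j where j: "j < length s" "s ! j = z" by (auto simp: in_set_conv_nth)
      have "j \<le> i"
      proof (rule ccontr)
        assume "\<not> j \<le> i"
        then have "le y z" using sorted_wrt_nth_less[OF P(3), of i j] j y_def by simp
        then have "y = z" using z yA fo_antisym[OF fo, of y z] by simp
        then have "j = i" using P(1) j i s_def y_def nth_eq_iff_index_eq by metis
        with \<open>\<not> j \<le> i\<close> show False by simp
      qed
      then have "take (Suc i) s ! j = z" "j < length (take (Suc i) s)" using j by auto
      then show "z \<in> set (take (Suc i) s)" using nth_mem by metis
    qed
  qed
  have "take (Suc i) s = alist A le y"
  proof (rule sorted_wrt_unique[where le=le])
    show "sorted_wrt le (take (Suc i) s)" using P(3) by (simp add: sorted_wrt_take)
    show "distinct (take (Suc i) s)" using P(1) by simp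
    show "set (take (Suc i) s) = set (alist A le y)" using set_eq Q by simp
    show "\<forall>x\<in>set (take (Suc i) s). \<forall>y\<in>set (take (Suc i) s). le x y \<and> le y x \<longrightarrow> x = y"
      using set_eq fo_antisym[OF fo] by blast
  qed (use Q in auto)
  then show ?thesis using s_def y_def by simp
qed



lemma chain_card_le_height:
  assumes "finite A" "is_chain_in A le C"
  shows "card C \<le> forest_height A le"
proof -
  have "finite {C. is_chain_in A le C}"
    using assms(1) by (rule finite_subset[rotated, OF finite_Pow_iff[THEN iffD2]]) (auto simp: is_chain_in_def)
  then show ?thesis unfolding forest_height_def using assms(2) by (auto intro: Max_ge)
qed

lemma alist_last:
  assumes fo: "forest_order A le" and fin: "finite A" and a: "a \<in> A"
  shows "last (alist A le a) = a" "alist A le a \<noteq> []"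
proof -
  define s where "s = alist A le a"
  note P = alist_props[OF fo fin a, folded s_def]
  have ain: "a \<in> set s" using P a fo unfolding forest_order_def by auto
  then show ne: "alist A le a \<noteq> []" using s_def by auto
  then have ls: "last s \<in> set s" using s_def by simp
  then have l1: "le (last s) a" "last s \<in> A" using P by auto
  obtain j where j: "j < length s" "s ! j = a" using ain by (auto simp: in_set_conv_nth)
  have lst: "last s = s ! (length s - 1)" using ne s_def by (simp add: last_conv_nth)
  have "le a (last s)"
  proof (cases "j = length s - 1")
    case True thus ?thesis using j lst fo a unfolding forest_order_def by auto
  next
    case False thus ?thesis using sorted_wrt_nth_less[OF P(3), of j "length s - 1"] j lst by simp
  qed
  then show "last (alist A le a) = a" using l1 a fo s_def unfolding forest_order_def by blast
qed

lemma alist_prefix: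
  assumes fo: "forest_order A le" and fin: "finite A" and x: "x \<in> A" and y: "y \<in> A"
    and xy: "le x y"
  shows "prefix (alist A le x) (alist A le y)"
proof -
  have "x \<in> set (alist A le y)" using alist_props(2)[OF fo fin y] x xy by auto
  then obtain i where i: "i < length (alist A le y)" "alist A le y ! i = x"
    by (auto simp: in_set_conv_nth)
  have "alist A le x = take (Suc i) (alist A le y)"
    using alist_take[OF fo fin y i(1)] i(2) by simp
  then show ?thesis by (simp add: take_is_prefix)
qed

lemma cover_to_coalg:
  assumes wf: "wf_structure A ar R" and fin: "finite A"
    and fc: "forest_cover A (gaifman_adj R) le"
  shows "Ek_coalgebra (forest_height A le) A R (alist A le)"
proof -
  have fo: "forest_order A le" using fc unfolding forest_cover_def by simp
  have univ: "alist A le a \<in> Ek_univ (forest_height A le) A" if a: "a \<in> A" for a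
  proof -
    have "is_chain_in A le {y\<in>A. le y a}"
      using fo a unfolding is_chain_in_def forest_order_def by blast
    then have "card {y\<in>A. le y a} \<le> forest_height A le" using chain_card_le_height fin by blast
    moreover have "length (alist A le a) = card {y\<in>A. le y a}"
      using alist_props[OF fo fin a] distinct_card by metis
    ultimately show ?thesis unfolding Ek_univ_def
      using alist_last(2)[OF fo fin a] alist_props(2)[OF fo fin a] by auto
  qed
  have rel: "Ek_rel R r (map (alist A le) t)" if Rt: "R r t" for r t
  proof -
    have tA: "set t \<subseteq> A" using wf Rt unfolding wf_structure_def by blast
    have "prefix (alist A le x) (alist A le y) \<or> prefix (alist A le y) (alist A le x)"
      if "x \<in> set t" "y \<in> set t" for x y
    proof (cases "x = y")
      case True thus ?thesis by simp
    next
      case False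
      then have "gaifman_adj R x y" unfolding gaifman_adj_def using Rt that by blast
      then have "le x y \<or> le y x" using fc tA that unfolding forest_cover_def by blast
      then show ?thesis using alist_prefix[OF fo fin] tA that by blast
    qed
    moreover have "map last (map (alist A le) t) = t"
      using alist_last(1)[OF fo fin] tA by (induction t) auto
    ultimately show ?thesis unfolding Ek_rel_def using Rt by auto
  qed
  have comult: "Ek_comult (alist A le a) = Ek_map (alist A le) (alist A le a)" if a: "a \<in> A" for a
    unfolding Ek_comult_def Ek_map_def
  proof (rule nth_equalityI)
    show "length (map (\<lambda>i. take i (alist A le a)) [1..<Suc (length (alist A le a))]) =
      length (map (alist A le) (alist A le a))" by (cases "length (alist A le a)") auto
    fix i assume "i < length (map (\<lambda>i. take i (alist A le a)) [1..<Suc (length (alist A le a))])"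
    then have i: "i < length (alist A le a)" by (simp del: upt_Suc)
    show "map (\<lambda>i. take i (alist A le a)) [1..<Suc (length (alist A le a))] ! i =
       map (alist A le) (alist A le a) ! i"
      using i alist_take[OF fo fin a i] by (simp add: nth_upt del: upt_Suc)
  qed
  show ?thesis unfolding Ek_coalgebra_def Ek_hom_def Ek_counit_def
    using univ rel comult alist_last(1)[OF fo fin] by blast
qed

lemma coalg_to_cover:
  assumes fin: "finite A" and co: "Ek_coalgebra k A R \<alpha>"
  shows "forest_cover A (gaifman_adj R) (\<lambda>x y. prefix (\<alpha> x) (\<alpha> y))"
    and "forest_height A (\<lambda>x y. prefix (\<alpha> x) (\<alpha> y)) \<le> k"
proof -
  have univ: "\<And>a. a \<in> A \<Longrightarrow> \<alpha> a \<in> Ek_univ k A"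
    and rel: "\<And>r t. R r t \<Longrightarrow> Ek_rel R r (map \<alpha> t)"
    and cu: "\<And>a. a \<in> A \<Longrightarrow> last (\<alpha> a) = a"
    using co unfolding Ek_coalgebra_def Ek_hom_def Ek_counit_def by auto
  have inj: "x = y" if "x \<in> A" "y \<in> A" "\<alpha> x = \<alpha> y" for x y
    using cu that by metis
  have fo: "forest_order A (\<lambda>x y. prefix (\<alpha> x) (\<alpha> y))"
    unfolding forest_order_def using fin inj
    by (auto intro: prefix_order.antisym dest: prefix_same_cases)
  show "forest_cover A (gaifman_adj R) (\<lambda>x y. prefix (\<alpha> x) (\<alpha> y))"
    unfolding forest_cover_def
  proof (intro conjI fo ballI impI)
    fix x y assume "x \<in> A" "y \<in> A" "gaifman_adj R x y"
    then obtain r t where "R r t" "x \<in> set t" "y \<in> set t" unfolding gaifman_adj_def by blast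
    then show "prefix (\<alpha> x) (\<alpha> y) \<or> prefix (\<alpha> y) (\<alpha> x)"
      using rel[of r t] unfolding Ek_rel_def by auto
  qed
  have "card C \<le> k" if C: "is_chain_in A (\<lambda>x y. prefix (\<alpha> x) (\<alpha> y)) C" for C
  proof -
    have CA: "C \<subseteq> A" using C unfolding is_chain_in_def by simp
    have "inj_on (\<lambda>c. length (\<alpha> c)) C"
    proof (rule inj_onI)
      fix x y assume xy: "x \<in> C" "y \<in> C" "length (\<alpha> x) = length (\<alpha> y)"
      then have "prefix (\<alpha> x) (\<alpha> y) \<or> prefix (\<alpha> y) (\<alpha> x)" using C unfolding is_chain_in_def by blast
      then have "\<alpha> x = \<alpha> y" using xy(3) prefix_length_le prefix_order.antisym
        by (metis prefix_length_prefix prefix_order.eq_iff)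
      then show "x = y" using inj xy CA by blast
    qed
    moreover have "(\<lambda>c. length (\<alpha> c)) ` C \<subseteq> {1..k}"
      using univ CA unfolding Ek_univ_def by (auto simp: Suc_le_eq)
    ultimately show ?thesis using card_inj_on_le[of _ C "{1..k}"] by fastforce
  qed
  moreover have "finite {C. is_chain_in A (\<lambda>x y. prefix (\<alpha> x) (\<alpha> y)) C}"
    using fin by (rule finite_subset[rotated, OF finite_Pow_iff[THEN iffD2]]) (auto simp: is_chain_in_def)
  moreover have "{} \<in> {C. is_chain_in A (\<lambda>x y. prefix (\<alpha> x) (\<alpha> y)) C}"
    by (simp add: is_chain_in_def)
  ultimately show "forest_height A (\<lambda>x y. prefix (\<alpha> x) (\<alpha> y)) \<le> k"
    unfolding forest_height_def by (subst Max_le_iff) auto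
qed



lemma exists_cover:
  assumes fin: "finite A"
  shows "\<exists>le. forest_cover A (gaifman_adj R) le"
proof -
  obtain f :: "'a \<Rightarrow> nat" where f: "inj_on f A"
    using finite_imp_inj_to_nat_seg[OF fin] by blast
  have "forest_cover A (gaifman_adj R) (\<lambda>x y. f x \<le> f y)"
    unfolding forest_cover_def forest_order_def using fin f
    by (auto dest: inj_onD)
  then show ?thesis by blast
qed

theorem mainTheorem12:
  fixes A :: "'a set" and ar :: "'r \<Rightarrow> nat" and R :: "'r \<Rightarrow> 'a list \<Rightarrow> bool"
  assumes "wf_structure A ar R" and "finite A" and "A \<noteq> {}"
  shows "td A R = kappaE A R"
proof -
  have exh: "\<exists>h le. forest_cover A (gaifman_adj R) le \<and> forest_height A le = h"
    using exists_cover[OF assms(2)] by blast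
  obtain le0 where le0: "forest_cover A (gaifman_adj R) le0" "forest_height A le0 = td A R"
    using LeastI_ex[OF exh] unfolding td_def by blast
  obtain a where a: "a \<in> A" using assms(3) by blast
  have "is_chain_in A le0 {a}" using a le0(1)
    unfolding is_chain_in_def forest_cover_def forest_order_def by auto
  then have h1: "1 \<le> td A R" using chain_card_le_height[OF assms(2)] le0(2) by fastforce
  have co: "Ek_coalgebra (td A R) A R (alist A le0)"
    using cover_to_coalg[OF assms(1,2) le0(1)] le0(2) by simp
  then have exk: "\<exists>k. 1 \<le> k \<and> (\<exists>\<alpha>. Ek_coalgebra k A R \<alpha>)" using h1 by blast
  have le1: "kappaE A R \<le> td A R" unfolding kappaE_def
    using h1 co by (intro Least_le) blast
  obtain \<alpha> where al: "Ek_coalgebra (kappaE A R) A R \<alpha>"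
    using LeastI_ex[OF exk] unfolding kappaE_def by blast
  note cc = coalg_to_cover[OF assms(2) al]
  have "td A R \<le> forest_height A (\<lambda>x y. prefix (\<alpha> x) (\<alpha> y))"
    unfolding td_def using cc(1) by (intro Least_le) blast
  then show ?thesis using cc(2) le1 by simp
qed

end
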